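(* Let $G=(\mathcal{N},\mathcal{L})$ be a finite undirected graph with distinct non-adjacent vertices $a$ (Alice) and $b$ (Bob). Suppose each edge $e\in\mathcal{L}$ carries a key $k_e\in\{0,1\}^n$, the keys being independent and uniformly distributed. In scheme $\mathcal{M}_0$, every vertex $v\notin\{a,b\}$ publicly announces $p_v=\bigoplus_{e\ni v}k_e$ (XOR over all edges incident to $v$); Alice computes $k_A=\bigoplus_{e\ni a}k_e$; Bob computes $k_B=\big(\bigoplus_{v\notin\{a,b\}}p_v\big)\oplus\big(\bigoplus_{e\ni b}k_e\big)$. Then (i) $k_B=k_A$; and (ii) for an attack $\mathcal{A}\subseteq\mathcal{N}\setminus\{a,b\}$, in which the eavesdropper learns all announced parities $p_v$ and all keys $k_e$ with $e\in\mathcal{L}_A$, the key $k_A$ is uniformly distributed and independent of the eavesdropper's information if $\mathcal{A}$ is not a strongest attack, whereas if $\mathcal{A}$ is a strongest attack the eavesdropper can compute $k_A$. In other words, $\mathcal{M}_0$ has the highest security level: it is insecure exactly against the strongest attacks.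
   Context: $\mathcal{L}_A$ is the set of edges with at least one endpoint in $\mathcal{A}$. A communication scheme $\mathcal{M}$ is a set of simple paths from $a$ to $b$; $sec(\mathcal{A},\mathcal{M})=1$ if some path in $\mathcal{M}$ avoids all vertices of $\mathcal{A}$, else $0$. An attack $\mathcal{A}$ is strongest if $sec(\mathcal{A},\mathcal{M})=0$ for all schemes $\mathcal{M}$; equivalently, there is a vertex partition separating $a$ from $b$ all of whose crossing edges lie in $\mathcal{L}_A$. A scheme has the highest security level if it is secure against exactly the attacks that are not strongest. *)

theory Defs
  imports "HOL-Probability.Probability"
begin

definition graph :: "'v set \<Rightarrow> 'v set set \<Rightarrow> bool" where
  "graph N L \<longleftrightarrow> finite N \<and> (\<forall>e\<in>L. \<exists>u v. e = {u, v} \<and> u \<noteq> v \<and> u \<in> N \<and> v \<in> N)"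

definition incident :: "'v set set \<Rightarrow> 'v \<Rightarrow> 'v set set" where
  "incident L v = {e \<in> L. v \<in> e}"

definition attacked_edges :: "'v set set \<Rightarrow> 'v set \<Rightarrow> 'v set set" where
  "attacked_edges L A = {e \<in> L. e \<inter> A \<noteq> {}}"

definition simple_path :: "'v set set \<Rightarrow> 'v \<Rightarrow> 'v \<Rightarrow> 'v list \<Rightarrow> bool" where
  "simple_path L a b p \<longleftrightarrow> p \<noteq> [] \<and> hd p = a \<and> last p = b \<and> distinct p \<and>
     (\<forall>i. Suc i < length p \<longrightarrow> {p ! i, p ! Suc i} \<in> L)"

definition scheme :: "'v set set \<Rightarrow> 'v \<Rightarrow> 'v \<Rightarrow> 'v list set \<Rightarrow> bool" where
  "scheme L a b M \<longleftrightarrow> (\<forall>p\<in>M. simple_path L a b p)"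

definition sec :: "'v set \<Rightarrow> 'v list set \<Rightarrow> bool" where
  "sec A M \<longleftrightarrow> (\<exists>p\<in>M. set p \<inter> A = {})"

definition strongest_attack :: "'v set set \<Rightarrow> 'v \<Rightarrow> 'v \<Rightarrow> 'v set \<Rightarrow> bool" where
  "strongest_attack L a b A \<longleftrightarrow> (\<forall>M. scheme L a b M \<longrightarrow> \<not> sec A M)"

text \<open>Bit strings of length n are represented as functions nat \<Rightarrow> bool that vanish
at positions \<ge> n.\<close>
definition bitstrings :: "nat \<Rightarrow> (nat \<Rightarrow> bool) set" where
  "bitstrings n = {x. \<forall>i\<ge>n. \<not> x i}"

definition xor2 :: "(nat \<Rightarrow> bool) \<Rightarrow> (nat \<Rightarrow> bool) \<Rightarrow> nat \<Rightarrow> bool" where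
  "xor2 x y = (\<lambda>i. x i \<noteq> y i)"

definition xors :: "'a set \<Rightarrow> ('a \<Rightarrow> nat \<Rightarrow> bool) \<Rightarrow> nat \<Rightarrow> bool" where
  "xors S f = (\<lambda>i. odd (card {x \<in> S. f x i}))"

definition key_space :: "nat \<Rightarrow> 'v set set \<Rightarrow> ('v set \<Rightarrow> nat \<Rightarrow> bool) set" where
  "key_space n L = PiE L (\<lambda>_. bitstrings n)"

definition parity :: "'v set set \<Rightarrow> ('v set \<Rightarrow> nat \<Rightarrow> bool) \<Rightarrow> 'v \<Rightarrow> nat \<Rightarrow> bool" where
  "parity L k v = xors (incident L v) k"

definition key_A :: "'v set set \<Rightarrow> 'v \<Rightarrow> ('v set \<Rightarrow> nat \<Rightarrow> bool) \<Rightarrow> nat \<Rightarrow> bool" where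
  "key_A L a k = xors (incident L a) k"

definition key_B :: "'v set \<Rightarrow> 'v set set \<Rightarrow> 'v \<Rightarrow> 'v \<Rightarrow> ('v set \<Rightarrow> nat \<Rightarrow> bool) \<Rightarrow> nat \<Rightarrow> bool" where
  "key_B N L a b k = xor2 (xors (N - {a, b}) (parity L k)) (xors (incident L b) k)"

definition eve_view :: "'v set \<Rightarrow> 'v set set \<Rightarrow> 'v \<Rightarrow> 'v \<Rightarrow> 'v set \<Rightarrow>
    ('v set \<Rightarrow> nat \<Rightarrow> bool) \<Rightarrow> ('v \<Rightarrow> nat \<Rightarrow> bool) \<times> ('v set \<Rightarrow> nat \<Rightarrow> bool)" where
  "eve_view N L a b A k = (restrict (parity L k) (N - {a, b}), restrict k (attacked_edges L A))"

end

theory Submission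
  imports Defs
begin


lemma card_filter_insert:
  "finite F \<Longrightarrow> y \<notin> F \<Longrightarrow> card {x \<in> insert y F. P x} = (if P y then Suc (card {x\<in>F. P x}) else card {x\<in>F. P x})"
proof -
  have "{x \<in> insert y F. P x} = (if P y then insert y {x\<in>F. P x} else {x\<in>F. P x})" by auto
  moreover assume "finite F" "y \<notin> F"
  ultimately show ?thesis by simp
qed

lemma card_xor:
  assumes "finite S"
  shows "odd (card {x\<in>S. P x \<noteq> Q x}) = (odd (card {x\<in>S. P x}) \<noteq> odd (card {x\<in>S. Q x}))"
  using assms proof (induction S rule: finite_induct)
  case (insert y F) show ?case
    unfolding card_filter_insert[OF insert(1,2)] using insert by auto
qed simp

lemma odd_sum_card:
  assumes "finite S"
  shows "odd (sum (f::_\<Rightarrow>nat) S) = odd (card {x\<in>S. odd (f x)})"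
  using assms proof (induction S rule: finite_induct)
  case (insert y F) show ?case
    unfolding card_filter_insert[OF insert(1,2)] using insert by auto
qed simp

lemma double_count:
  assumes "finite V" "finite E"
  shows "(\<Sum>v\<in>V. card {e\<in>E. v \<in> e}) = (\<Sum>e\<in>E. card (e \<inter> V))"
proof -
  have "(\<Sum>v\<in>V. card {e\<in>E. v \<in> e}) = (\<Sum>v\<in>V. \<Sum>e\<in>E. if v \<in> e then 1 else 0)"
    using assms by (simp add: sum.inter_filter[symmetric])
  also have "\<dots> = (\<Sum>e\<in>E. \<Sum>v\<in>V. if v \<in> e then 1 else 0)" by (rule sum.swap)
  also have "\<dots> = (\<Sum>e\<in>E. card (e \<inter> V))"
  proof (rule sum.cong)
    fix e assume "e \<in> E"
    have "(\<Sum>v\<in>V. if v \<in> e then 1 else 0) = card {v\<in>V. v \<in> e}"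
      using assms by (simp add: sum.inter_filter[symmetric])
    also have "{v\<in>V. v \<in> e} = e \<inter> V" by auto
    finally show "(\<Sum>v\<in>V. if v \<in> e then 1 else (0::nat)) = card (e \<inter> V)" .
  qed simp
  finally show ?thesis .
qed

definition shift :: "'e set \<Rightarrow> (nat \<Rightarrow> bool) \<Rightarrow> ('e \<Rightarrow> nat \<Rightarrow> bool) \<Rightarrow> 'e \<Rightarrow> nat \<Rightarrow> bool" where
  "shift P x k = (\<lambda>e. if e \<in> P then xor2 (k e) x else k e)"

lemma xors_shift:
  assumes "finite S"
  shows "xors S (shift P x k) i = (xors S k i \<noteq> (x i \<and> odd (card {e\<in>S. e \<in> P})))"
proof -
  have "{e\<in>S. shift P x k e i} = {e\<in>S. k e i \<noteq> (e \<in> P \<and> x i)}"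
    by (auto simp: shift_def xor2_def)
  moreover have "odd (card {e\<in>S. e \<in> P \<and> x i}) = (x i \<and> odd (card {e\<in>S. e \<in> P}))"
    by (cases "x i") auto
  ultimately show ?thesis using card_xor[OF assms, of "\<lambda>e. k e i" "\<lambda>e. e \<in> P \<and> x i"]
    by (simp add: xors_def)
qed

lemma xor2_cancel[simp]: "xor2 (xor2 y x) x = y"
  by (auto simp: xor2_def)

lemma xor2_bits: "y \<in> bitstrings n \<Longrightarrow> x \<in> bitstrings n \<Longrightarrow> xor2 y x \<in> bitstrings n"
  by (auto simp: xor2_def bitstrings_def)

lemma finite_bitstrings: "finite (bitstrings n)"
proof -
  have "bitstrings n \<subseteq> (\<lambda>S i. i \<in> S) ` Pow {..<n}"
  proof
    fix x assume "x \<in> bitstrings n"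
    hence "{i. x i} \<in> Pow {..<n}" by (auto simp: bitstrings_def not_less[symmetric])
    moreover have "x = (\<lambda>i. i \<in> {i. x i})" by auto
    ultimately show "x \<in> (\<lambda>S i. i \<in> S) ` Pow {..<n}" by blast
  qed
  thus ?thesis by (rule finite_subset) auto
qed

lemma bitstrings_ne: "(\<lambda>_. False) \<in> bitstrings n"
  by (simp add: bitstrings_def)

lemma xor2_bij: "y \<in> bitstrings n \<Longrightarrow> bij_betw (xor2 y) (bitstrings n) (bitstrings n)"
  by (rule bij_betw_byWitness[where f'="xor2 y"]) (auto simp: xor2_def bitstrings_def fun_eq_iff)

lemma uniform_shift:
  fixes K :: "'k set" and view :: "'k \<Rightarrow> 'w" and B :: "(nat \<Rightarrow> bool) set"
  assumes K: "finite K" "K \<noteq> {}" and B: "finite B" "B \<noteq> {}"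
    and sb: "\<And>x. x \<in> B \<Longrightarrow> bij_betw (s x) K K"
    and sv: "\<And>x k. x \<in> B \<Longrightarrow> k \<in> K \<Longrightarrow> view (s x k) = view k \<and> ka (s x k) = xor2 (ka k) x"
    and kaB: "\<And>k. k \<in> K \<Longrightarrow> ka k \<in> B"
    and xb: "\<And>y. y \<in> B \<Longrightarrow> bij_betw (xor2 y) B B"
  shows "map_pmf (\<lambda>k. (ka k, view k)) (pmf_of_set K) = pair_pmf (pmf_of_set B) (map_pmf view (pmf_of_set K))"
proof -
  define D where "D = map_pmf (\<lambda>k. (ka k, view k)) (pmf_of_set K)"
  define \<tau> where "\<tau> = (\<lambda>x (y::nat\<Rightarrow>bool, w::'w). (xor2 y x, w))"
  have inv: "map_pmf (\<tau> x) D = D" if x: "x \<in> B" for x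
  proof -
    have "map_pmf (\<tau> x) D = map_pmf (\<lambda>k. (ka (s x k), view (s x k))) (pmf_of_set K)"
      unfolding D_def map_pmf_comp using sv[OF x] K by (intro map_pmf_cong) (auto simp: \<tau>_def)
    also have "\<dots> = map_pmf (\<lambda>k. (ka k, view k)) (map_pmf (s x) (pmf_of_set K))"
      by (simp add: map_pmf_comp)
    also have "map_pmf (s x) (pmf_of_set K) = pmf_of_set K"
      by (rule map_pmf_of_set_bij_betw[OF sb[OF x] K(2,1)])
    finally show ?thesis unfolding D_def .
  qed
  have setD: "set_pmf D = (\<lambda>k. (ka k, view k)) ` K" using K by (simp add: D_def)
  have "D = bind_pmf (pmf_of_set B) (\<lambda>x. D)" by simp
  also have "\<dots> = bind_pmf (pmf_of_set B) (\<lambda>x. map_pmf (\<tau> x) D)"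
    using B by (intro bind_pmf_cong) (auto simp: inv)
  also have "\<dots> = bind_pmf D (\<lambda>z. map_pmf (\<lambda>x. \<tau> x z) (pmf_of_set B))"
    unfolding map_pmf_def by (rule bind_commute_pmf)
  also have "\<dots> = bind_pmf D (\<lambda>z. map_pmf (\<lambda>u. (u, snd z)) (pmf_of_set B))"
  proof (intro bind_pmf_cong refl)
    fix z assume "z \<in> set_pmf D"
    then obtain k where k: "k \<in> K" "z = (ka k, view k)" using setD by auto
    have "map_pmf (\<lambda>x. \<tau> x z) (pmf_of_set B) = map_pmf (\<lambda>u. (u, snd z)) (map_pmf (xor2 (ka k)) (pmf_of_set B))"
      by (simp add: map_pmf_comp k \<tau>_def)
    also have "map_pmf (xor2 (ka k)) (pmf_of_set B) = pmf_of_set B"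
      by (rule map_pmf_of_set_bij_betw[OF xb[OF kaB[OF k(1)]] B(2,1)])
    finally show "map_pmf (\<lambda>x. \<tau> x z) (pmf_of_set B) = map_pmf (\<lambda>u. (u, snd z)) (pmf_of_set B)" .
  qed
  also have "\<dots> = bind_pmf (map_pmf snd D) (\<lambda>w. map_pmf (\<lambda>u. (u, w)) (pmf_of_set B))"
    by (simp add: bind_map_pmf)
  also have "\<dots> = pair_pmf (pmf_of_set B) (map_pmf snd D)"
    unfolding pair_pmf_def map_pmf_def by (rule bind_commute_pmf)
  also have "map_pmf snd D = map_pmf view (pmf_of_set K)"
    by (simp add: D_def map_pmf_comp)
  finally show ?thesis unfolding D_def .
qed



lemma graph_finite_L: "graph N L \<Longrightarrow> finite L"
proof -
  assume g: "graph N L"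
  hence "L \<subseteq> Pow N" by (force simp: graph_def)
  thus "finite L" using g by (auto simp: graph_def intro: finite_subset)
qed

lemma graph_edge: "graph N L \<Longrightarrow> e \<in> L \<Longrightarrow> \<exists>u w. e = {u, w} \<and> u \<noteq> w \<and> u \<in> N \<and> w \<in> N"
  by (auto simp: graph_def)

lemma edge_parity:
  assumes "graph N L" "a \<in> N" "b \<in> N" "a \<noteq> b" "{a, b} \<notin> L" "e \<in> L"
  shows "odd (card (e \<inter> (N - {a, b}))) = ((a \<in> e) \<noteq> (b \<in> e))"
proof -
  obtain u w where e: "e = {u, w}" "u \<noteq> w" "u \<in> N" "w \<in> N" using graph_edge[OF assms(1,6)] by blast
  have nab: "e \<noteq> {a, b}" using assms by auto
  have "e \<inter> (N - {a, b}) = e - {a, b}" using e by auto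
  thus ?thesis using e nab assms(4)
    by (cases "u=a"; cases "u=b"; cases "w=a"; cases "w=b") (auto simp: insert_commute)
qed

lemma part1:
  assumes g: "graph N L" and ab: "a \<in> N" "b \<in> N" "a \<noteq> b" "{a, b} \<notin> L"
  shows "key_B N L a b k = key_A L a k"
proof
  fix i
  have fL: "finite L" using graph_finite_L[OF g] .
  have fN: "finite N" using g by (simp add: graph_def)
  define I where "I = N - {a, b}"
  define Ki where "Ki = {e\<in>L. k e i}"
  have fI: "finite I" using fN by (simp add: I_def)
  have fK: "finite Ki" using fL by (simp add: Ki_def)
  have eqs: "\<And>v. {e\<in>incident L v. k e i} = {e\<in>Ki. v \<in> e}" by (auto simp: incident_def Ki_def)
  have "xors I (parity L k) i = odd (card {v\<in>I. odd (card {e\<in>Ki. v \<in> e})})"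
    unfolding xors_def parity_def eqs ..
  also have "\<dots> = odd (\<Sum>v\<in>I. card {e\<in>Ki. v \<in> e})" using odd_sum_card[OF fI] by simp
  also have "\<dots> = odd (\<Sum>e\<in>Ki. card (e \<inter> I))" using double_count[OF fI fK] by simp
  also have "\<dots> = odd (card {e\<in>Ki. odd (card (e \<inter> I))})" using odd_sum_card[OF fK] by simp
  also have "{e\<in>Ki. odd (card (e \<inter> I))} = {e\<in>Ki. (a \<in> e) \<noteq> (b \<in> e)}"
    using edge_parity[OF g ab] unfolding I_def Ki_def by blast
  also have "odd (card \<dots>) = (odd (card {e\<in>Ki. a \<in> e}) \<noteq> odd (card {e\<in>Ki. b \<in> e}))"
    by (rule card_xor[OF fK])
  finally have 1: "xors I (parity L k) i = (odd (card {e\<in>Ki. a \<in> e}) \<noteq> odd (card {e\<in>Ki. b \<in> e}))" .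
  have 2: "\<And>v. xors (incident L v) k i = odd (card {e\<in>Ki. v \<in> e})"
    unfolding xors_def eqs ..
  show "key_B N L a b k i = key_A L a k i"
    unfolding key_B_def key_A_def xor2_def I_def[symmetric] 1 2 by blast
qed



definition pe :: "'v list \<Rightarrow> 'v set set" where
  "pe p = (\<lambda>j. {p!j, p!Suc j}) ` {j. Suc j < length p}"

lemma pe_sub: "simple_path L a b p \<Longrightarrow> pe p \<subseteq> L"
  by (auto simp: pe_def simple_path_def)

lemma path_len: "simple_path L a b p \<Longrightarrow> a \<noteq> b \<Longrightarrow> Suc 0 < length p"
proof (rule ccontr)
  assume sp: "simple_path L a b p" "a \<noteq> b" "\<not> Suc 0 < length p"
  then obtain x where "p = [x]" by (cases p) (auto simp: simple_path_def)
  thus False using sp by (auto simp: simple_path_def)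
qed

lemma pe_a:
  assumes sp: "simple_path L a b p" and ab: "a \<noteq> b"
  shows "card {e\<in>pe p. a \<in> e} = 1"
proof -
  have len: "Suc 0 < length p" using path_len[OF sp ab] .
  have a0: "p!0 = a" using sp by (auto simp: simple_path_def hd_conv_nth)
  have d: "distinct p" using sp by (simp add: simple_path_def)
  have "{e\<in>pe p. a \<in> e} = {{p!0, p!Suc 0}}"
  proof
    show "{{p!0, p!Suc 0}} \<subseteq> {e\<in>pe p. a \<in> e}" using len a0 by (auto simp: pe_def)
    show "{e\<in>pe p. a \<in> e} \<subseteq> {{p!0, p!Suc 0}}"
    proof
      fix e assume "e \<in> {e\<in>pe p. a \<in> e}"
      then obtain j where j: "Suc j < length p" "e = {p!j, p!Suc j}" "a \<in> e" by (auto simp: pe_def)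
      have "p!j = p!0 \<or> p!Suc j = p!0" using j a0 by auto
      hence "j = 0" using nth_eq_iff_index_eq[OF d] j(1) len by (metis Suc_lessD less_trans_Suc nat.distinct(1) zero_less_Suc)
      thus "e \<in> {{p!0, p!Suc 0}}" using j by simp
    qed
  qed
  thus ?thesis by simp
qed

lemma pe_notin: "v \<notin> set p \<Longrightarrow> {e\<in>pe p. v \<in> e} = {}"
  by (auto simp: pe_def)

lemma pe_interior:
  assumes sp: "simple_path L a b p" and v: "v \<in> set p" "v \<noteq> a" "v \<noteq> b"
  shows "card {e\<in>pe p. v \<in> e} = 2"
proof -
  have d: "distinct p" and ne: "p \<noteq> []" using sp by (auto simp: simple_path_def)
  obtain m where m: "m < length p" "p!m = v" using v(1) by (auto simp: in_set_conv_nth)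
  have "m \<noteq> 0"
  proof
    assume "m = 0" thus False using m v sp ne by (auto simp: simple_path_def hd_conv_nth)
  qed
  moreover have "m \<noteq> length p - 1"
  proof
    assume "m = length p - 1" thus False using m v sp ne by (auto simp: simple_path_def last_conv_nth)
  qed
  ultimately obtain m' where m': "m = Suc m'" "Suc m < length p" using m(1)
    by (cases m) auto
  have neq: "p!m' \<noteq> p!Suc m" "p!m' \<noteq> p!m" "p!m \<noteq> p!Suc m"
    using nth_eq_iff_index_eq[OF d] m' by auto
  have "{e\<in>pe p. v \<in> e} = {{p!m', p!m}, {p!m, p!Suc m}}"
  proof
    show "{{p!m', p!m}, {p!m, p!Suc m}} \<subseteq> {e\<in>pe p. v \<in> e}" using m m' by (auto simp: pe_def)
    show "{e\<in>pe p. v \<in> e} \<subseteq> {{p!m', p!m}, {p!m, p!Suc m}}"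
    proof
      fix e assume "e \<in> {e\<in>pe p. v \<in> e}"
      then obtain j where j: "Suc j < length p" "e = {p!j, p!Suc j}" "v \<in> e" by (auto simp: pe_def)
      have "p!j = p!m \<or> p!Suc j = p!m" using j m by auto
      hence "j = m \<or> Suc j = m" using nth_eq_iff_index_eq[OF d] j(1) m(1) by (meson Suc_lessD)
      thus "e \<in> {{p!m', p!m}, {p!m, p!Suc m}}" using j m' by auto
    qed
  qed
  moreover have "{p!m', p!m} \<noteq> {p!m, p!Suc m}" using neq by (auto simp: doubleton_eq_iff)
  ultimately show ?thesis by simp
qed

lemma pe_attacked: "set p \<inter> A = {} \<Longrightarrow> pe p \<inter> attacked_edges L A = {}"
  by (auto simp: pe_def attacked_edges_def) (meson Suc_lessD disjoint_iff nth_mem)+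



definition rel :: "'v set set \<Rightarrow> 'v set \<Rightarrow> ('v \<times> 'v) set" where
  "rel L A = {(u, w). {u, w} \<in> L \<and> u \<notin> A \<and> w \<notin> A}"

lemma reach_path:
  assumes "(a, v) \<in> (rel L A)\<^sup>*" "a \<notin> A"
  shows "\<exists>p. simple_path L a v p \<and> set p \<inter> A = {}"
  using assms(1)
proof (induction rule: rtrancl_induct)
  case base
  show ?case using assms(2) by (intro exI[of _ "[a]"]) (auto simp: simple_path_def)
next
  case (step y z)
  obtain p where p: "simple_path L a y p" "set p \<inter> A = {}" using step.IH by blast
  have yz: "{y, z} \<in> L" "z \<notin> A" using step.hyps(2) by (auto simp: rel_def)
  have ne: "p \<noteq> []" and hd: "hd p = a" and lst: "last p = y" and d: "distinct p"
    and ed: "\<And>i. Suc i < length p \<Longrightarrow> {p!i, p!Suc i} \<in> L" using p by (auto simp: simple_path_def)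
  show ?case
  proof (cases "z \<in> set p")
    case True
    then obtain j where j: "j < length p" "p!j = z" by (auto simp: in_set_conv_nth)
    define q where "q = take (Suc j) p"
    have lq: "length q = Suc j" using j by (simp add: q_def)
    have "simple_path L a z q"
      unfolding simple_path_def
    proof (intro conjI allI impI)
      show "q \<noteq> []" using lq by auto
      show "hd q = a" using hd by (simp add: q_def)
      have "q \<noteq> []" using lq by auto
      hence "last q = q!j" using lq by (simp add: last_conv_nth)
      thus "last q = z" using j by (simp add: q_def)
      show "distinct q" using d by (simp add: q_def)
      fix i assume "Suc i < length q"
      thus "{q!i, q!Suc i} \<in> L" using ed[of i] lq j by (simp add: q_def)
    qed
    moreover have "set q \<inter> A = {}" using p(2) set_take_subset[of "Suc j" p] by (auto simp: q_def)
    ultimately show ?thesis by blast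
  next
    case False
    define q where "q = p @ [z]"
    have "simple_path L a z q"
      unfolding simple_path_def
    proof (intro conjI allI impI)
      show "q \<noteq> []" by (simp add: q_def)
      show "hd q = a" using hd ne by (simp add: q_def)
      show "last q = z" by (simp add: q_def)
      show "distinct q" using d False by (simp add: q_def)
      fix i assume i: "Suc i < length q"
      show "{q!i, q!Suc i} \<in> L"
      proof (cases "Suc i < length p")
        case True thus ?thesis using ed[of i] by (simp add: q_def nth_append)
      next
        case False
        hence "i = length p - 1" "Suc i = length p" using i by (auto simp: q_def)
        moreover have "p!(length p - 1) = y" using lst ne by (simp add: last_conv_nth)
        ultimately show ?thesis using yz ne by (simp add: q_def nth_append)
      qed
    qed
    moreover have "set q \<inter> A = {}" using p(2) yz by (auto simp: q_def)
    ultimately show ?thesis by blast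
  qed
qed



lemma cut_lemma:
  assumes g: "graph N L" and ab: "a \<in> N" "b \<in> N" "a \<noteq> b" "{a, b} \<notin> L"
    and A: "A \<subseteq> N - {a, b}" and st: "strongest_attack L a b A"
    and vv: "eve_view N L a b A k = eve_view N L a b A k'"
  shows "key_A L a k = key_A L a k'"
proof
  fix i
  have fL: "finite L" using graph_finite_L[OF g] .
  have fN: "finite N" using g by (simp add: graph_def)
  define I where "I = N - {a, b}"
  define Q where "Q = {e\<in>L. k e i \<noteq> k' e i}"
  have fQ: "finite Q" using fL by (simp add: Q_def)
  have incQ: "\<And>v. {e\<in>incident L v. k e i \<noteq> k' e i} = {e\<in>Q. v \<in> e}"
    by (auto simp: incident_def Q_def)
  have finc: "\<And>v. finite (incident L v)" using fL by (simp add: incident_def)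
  have xq: "\<And>v. odd (card {e\<in>Q. v \<in> e}) = (xors (incident L v) k i \<noteq> xors (incident L v) k' i)"
    unfolding xors_def incQ[symmetric] by (rule card_xor[OF finc])
  have par: "\<And>v. v \<in> I \<Longrightarrow> parity L k v = parity L k' v"
  proof -
    fix v assume "v \<in> I"
    have "restrict (parity L k) I v = restrict (parity L k') I v"
      using vv by (simp add: eve_view_def I_def)
    thus "parity L k v = parity L k' v" using \<open>v \<in> I\<close> by simp
  qed
  have evI: "even (card {e\<in>Q. v \<in> e})" if v: "v \<in> I" for v
  proof -
    have "xors (incident L v) k i = xors (incident L v) k' i"
      using par[OF v] by (simp add: parity_def)
    thus ?thesis using xq[of v] by simp
  qed
  have att: "\<And>e. e \<in> Q \<Longrightarrow> e \<inter> A = {}"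
  proof (rule ccontr)
    fix e assume e: "e \<in> Q" "e \<inter> A \<noteq> {}"
    hence ea: "e \<in> attacked_edges L A" by (simp add: attacked_edges_def Q_def)
    have "restrict k (attacked_edges L A) e = restrict k' (attacked_edges L A) e"
      using vv by (simp add: eve_view_def)
    hence "k e = k' e" using ea by simp
    thus False using e by (simp add: Q_def)
  qed
  define C where "C = (rel L A)\<^sup>* `` {a}"
  have aA: "a \<notin> A" using A by auto
  have aC: "a \<in> C" by (simp add: C_def)
  have CN: "C \<subseteq> N"
  proof
    fix v assume "v \<in> C"
    hence "(a, v) \<in> (rel L A)\<^sup>*" by (simp add: C_def)
    thus "v \<in> N"
    proof (cases rule: rtranclE)
      case base thus ?thesis using ab by simp
    next
      case (step u)
      hence "{u, v} \<in> L" by (simp add: rel_def)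
      then obtain x y where "{u, v} = {x, y}" "x \<in> N" "y \<in> N" using graph_edge[OF g] by blast
      thus ?thesis by (auto simp: doubleton_eq_iff)
    qed
  qed
  have bC: "b \<notin> C"
  proof
    assume "b \<in> C"
    hence "(a, b) \<in> (rel L A)\<^sup>*" by (simp add: C_def)
    then obtain p where p: "simple_path L a b p" "set p \<inter> A = {}" using reach_path[OF _ aA] by blast
    have "scheme L a b {p}" "sec A {p}" using p by (auto simp: scheme_def sec_def)
    thus False using st by (auto simp: strongest_attack_def)
  qed
  have fC: "finite C" using CN fN finite_subset by blast
  have evC: "\<And>e. e \<in> Q \<Longrightarrow> even (card (e \<inter> C))"
  proof -
    fix e assume e: "e \<in> Q"
    obtain u w where uw: "e = {u, w}" "u \<noteq> w" using graph_edge[OF g, of e] e unfolding Q_def by blast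
    have uwA: "u \<notin> A" "w \<notin> A" using att[OF e] uw by auto
    have eL: "{u, w} \<in> L" "{w, u} \<in> L" using e uw by (auto simp: Q_def insert_commute)
    show "even (card (e \<inter> C))"
    proof (cases "u \<in> C \<or> w \<in> C")
      case True
      hence "u \<in> C \<and> w \<in> C"
      proof
        assume "u \<in> C"
        moreover have "(u, w) \<in> rel L A" using eL uwA by (simp add: rel_def)
        ultimately show ?thesis unfolding C_def by (meson Image_iff rtrancl.rtrancl_into_rtrancl)
      next
        assume "w \<in> C"
        moreover have "(w, u) \<in> rel L A" using eL uwA by (simp add: rel_def)
        ultimately show ?thesis unfolding C_def by (meson Image_iff rtrancl.rtrancl_into_rtrancl)
      qed
      hence "e \<inter> C = {u, w}" using uw by auto
      thus ?thesis using uw by simp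
    next
      case False
      hence "e \<inter> C = {}" using uw by auto
      thus ?thesis by simp
    qed
  qed
  have "even (\<Sum>v\<in>C. card {e\<in>Q. v \<in> e})"
  proof -
    have e: "{e\<in>Q. odd (card (e \<inter> C))} = {}" using evC by blast
    have s: "odd (\<Sum>e\<in>Q. card (e \<inter> C)) = odd (card {e\<in>Q. odd (card (e \<inter> C))})"
      by (rule odd_sum_card[OF fQ])
    show ?thesis unfolding double_count[OF fC fQ] using s[unfolded e] by simp
  qed
  moreover have "(\<Sum>v\<in>C. card {e\<in>Q. v \<in> e}) = card {e\<in>Q. a \<in> e} + (\<Sum>v\<in>C-{a}. card {e\<in>Q. v \<in> e})"
    using fC aC by (simp add: sum.remove)
  moreover have "even (\<Sum>v\<in>C-{a}. card {e\<in>Q. v \<in> e})"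
  proof -
    have "C - {a} \<subseteq> I" using CN bC by (auto simp: I_def)
    hence e: "{v\<in>C-{a}. odd (card {e\<in>Q. v \<in> e})} = {}" using evI by blast
    have s: "odd (\<Sum>v\<in>C-{a}. card {e\<in>Q. v \<in> e}) = odd (card {v\<in>C-{a}. odd (card {e\<in>Q. v \<in> e})})"
      using fC by (intro odd_sum_card) simp
    show ?thesis using s[unfolded e] by simp
  qed
  ultimately have "even (card {e\<in>Q. a \<in> e})" by simp
  thus "key_A L a k i = key_A L a k' i" using xq[of a] by (simp add: key_A_def)
qed



theorem theorem2:
  fixes N :: "'v set" and L :: "'v set set" and a b :: 'v and n :: nat
  assumes "graph N L" and "a \<in> N" and "b \<in> N" and "a \<noteq> b" and "{a, b} \<notin> L"
  shows "(\<forall>k\<in>key_space n L. key_B N L a b k = key_A L a k) \<and>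
    (\<forall>A. A \<subseteq> N - {a, b} \<longrightarrow>
      (\<not> strongest_attack L a b A \<longrightarrow>
         map_pmf (\<lambda>k. (key_A L a k, eve_view N L a b A k)) (pmf_of_set (key_space n L)) =
         pair_pmf (pmf_of_set (bitstrings n))
                  (map_pmf (eve_view N L a b A) (pmf_of_set (key_space n L)))) \<and>
      (strongest_attack L a b A \<longrightarrow>
         (\<exists>g. \<forall>k\<in>key_space n L. g (eve_view N L a b A k) = key_A L a k)))"
proof -
  note g = assms(1) and ab = assms(2-5)
  define K where "K = key_space n L"
  define B where "B = bitstrings n"
  have fL: "finite L" using graph_finite_L[OF g] .
  have fB: "finite B" "B \<noteq> {}" using finite_bitstrings bitstrings_ne by (auto simp: B_def)
  have fK: "finite K" "K \<noteq> {}" using fL fB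
    by (auto simp: K_def key_space_def B_def finite_PiE PiE_eq_empty_iff)
  have finc: "\<And>v. finite (incident L v)" using fL by (simp add: incident_def)
  have kaB: "key_A L a k \<in> B" if k: "k \<in> K" for k
  proof -
    have "\<not> key_A L a k i" if i: "i \<ge> n" for i
    proof -
      have e: "{e\<in>incident L a. k e i} = {}"
        using k i by (auto simp: K_def key_space_def incident_def bitstrings_def PiE_iff)
      have "key_A L a k i = odd (card {e\<in>incident L a. k e i})" by (simp add: key_A_def xors_def)
      thus ?thesis by (simp only: e card.empty) simp
    qed
    thus ?thesis by (simp add: B_def bitstrings_def)
  qed
  have P2: "\<forall>A. A \<subseteq> N - {a, b} \<longrightarrow>
      (\<not> strongest_attack L a b A \<longrightarrow>
         map_pmf (\<lambda>k. (key_A L a k, eve_view N L a b A k)) (pmf_of_set K) =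
         pair_pmf (pmf_of_set B) (map_pmf (eve_view N L a b A) (pmf_of_set K))) \<and>
      (strongest_attack L a b A \<longrightarrow>
         (\<exists>g. \<forall>k\<in>K. g (eve_view N L a b A k) = key_A L a k))"
  proof (intro allI impI conjI)
    fix A assume A: "A \<subseteq> N - {a, b}"
    {
      assume "\<not> strongest_attack L a b A"
      then obtain p where sp: "simple_path L a b p" and pA: "set p \<inter> A = {}"
        by (auto simp: strongest_attack_def scheme_def sec_def)
      have PL: "pe p \<subseteq> L" using pe_sub[OF sp] .
      have incP: "\<And>v. {e\<in>incident L v. e \<in> pe p} = {e\<in>pe p. v \<in> e}" using PL by (auto simp: incident_def)
      have evv: "even (card {e\<in>incident L v. e \<in> pe p})" if v: "v \<in> N - {a, b}" for v
      proof (cases "v \<in> set p")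
        case True thus ?thesis using pe_interior[OF sp True] v unfolding incP by simp
      next
        case False thus ?thesis unfolding incP pe_notin[OF False] by simp
      qed
      have oa: "card {e\<in>incident L a. e \<in> pe p} = 1" using pe_a[OF sp ab(3)] unfolding incP by simp
      have PA: "pe p \<inter> attacked_edges L A = {}" using pe_attacked[OF pA] .
      show "map_pmf (\<lambda>k. (key_A L a k, eve_view N L a b A k)) (pmf_of_set K) =
         pair_pmf (pmf_of_set B) (map_pmf (eve_view N L a b A) (pmf_of_set K))"
      proof (rule uniform_shift[OF fK fB, where s = "shift (pe p)"])
        fix x assume x: "x \<in> B"
        have into: "shift (pe p) x k \<in> K" if k: "k \<in> K" for k
          using k x PL unfolding K_def key_space_def PiE_iff B_def
          by (auto simp: shift_def xor2_bits extensional_def)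
        show "bij_betw (shift (pe p) x) K K"
          by (rule bij_betw_byWitness[where f'="shift (pe p) x"]) (auto simp: into, auto simp: shift_def fun_eq_iff)
      next
        fix x k assume x: "x \<in> B" and k: "k \<in> K"
        have "restrict (parity L (shift (pe p) x k)) (N - {a, b}) = restrict (parity L k) (N - {a, b})"
        proof (rule restrict_ext)
          fix v assume v: "v \<in> N - {a, b}"
          show "parity L (shift (pe p) x k) v = parity L k v"
            unfolding parity_def using xors_shift[OF finc] evv[OF v] by auto
        qed
        moreover have "restrict (shift (pe p) x k) (attacked_edges L A) = restrict k (attacked_edges L A)"
          by (rule restrict_ext) (use PA in \<open>auto simp: shift_def\<close>)
        ultimately show "eve_view N L a b A (shift (pe p) x k) = eve_view N L a b A k \<and>
              key_A L a (shift (pe p) x k) = xor2 (key_A L a k) x"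
          unfolding eve_view_def key_A_def using xors_shift[OF finc] oa by (auto simp: xor2_def)
      next
        fix k assume "k \<in> K" thus "key_A L a k \<in> B" by (rule kaB)
      next
        fix y assume "y \<in> B" thus "bij_betw (xor2 y) B B" unfolding B_def by (rule xor2_bij)
      qed
    }
    {
      assume st: "strongest_attack L a b A"
      define gg where "gg = (\<lambda>w. key_A L a (SOME k. k \<in> K \<and> eve_view N L a b A k = w))"
      show "\<exists>g. \<forall>k\<in>K. g (eve_view N L a b A k) = key_A L a k"
      proof (intro exI ballI)
        fix k assume k: "k \<in> K"
        have "\<exists>k'. k' \<in> K \<and> eve_view N L a b A k' = eve_view N L a b A k" using k by blast
        hence "(SOME k'. k' \<in> K \<and> eve_view N L a b A k' = eve_view N L a b A k) \<in> K \<and>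
            eve_view N L a b A (SOME k'. k' \<in> K \<and> eve_view N L a b A k' = eve_view N L a b A k) = eve_view N L a b A k"
          by (rule someI_ex)
        thus "gg (eve_view N L a b A k) = key_A L a k"
          unfolding gg_def using cut_lemma[OF g ab A st] by blast
      qed
    }
  qed
  show ?thesis using P2 part1[OF g ab] unfolding K_def B_def by blast
qed


end
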